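(* Let $A=\mathrm{diag}(\lambda_1,\dots,\lambda_k)$ with distinct real $\lambda_j$, $|\lambda_j|>1$, let $h\ne0$, $p\ge0$, and let $\bar\Gamma\in\mathbb R^{1\times k}$ be a row vector with all entries nonzero. Let $\tilde J$ be the unique solution of $$\tilde J=A^{-1}\tilde JA^{-T}-\frac{\bar\Gamma^T\bar\Gamma}{1+h^2p}+A^{-1}\bar\Gamma^T\bar\Gamma A^{-T}.$$ Then, with $D_\Gamma=\mathrm{diag}(\bar\Gamma)$ (the diagonal matrix with the entries of $\bar\Gamma$ on its diagonal) and $M$ the solution of $M=A^{-1}MA^{-T}+\mathbf 1\mathbf 1^T$, $$\tilde J=D_\Gamma\Big(\frac{h^2p}{1+h^2p}M-\mathbf 1\mathbf 1^T\Big)D_\Gamma,$$ and $\tilde J\succ0$ if and only if $1+h^2p>|\det A|^2$, i.e. $\sum_{j=1}^k\log|\lambda_j|<\tfrac12\log(1+h^2p)$.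
   Context: $\mathbf 1\in\mathbb R^k$ denotes the all-ones vector. *)

theory Defs
  imports "HOL-Analysis.Analysis"
begin

definition diag_mat :: "real^'k \<Rightarrow> real^'k^'k" where
  "diag_mat v = (\<chi> i j. if i = j then v $ i else 0)"

text \<open>Outer product u v^T (for the row vector Gamma, Gamma^T Gamma = outer g g).\<close>
definition outer :: "real^'k \<Rightarrow> real^'k \<Rightarrow> real^'k^'k" where
  "outer u v = (\<chi> i j. u $ i * v $ j)"

definition ones_mat :: "real^'k^'k" where
  "ones_mat = (\<chi> i j. 1)"

definition pos_def :: "real^'k^'k \<Rightarrow> bool" where
  "pos_def J \<longleftrightarrow> transpose J = J \<and> (\<forall>x. x \<noteq> 0 \<longrightarrow> x \<bullet> (J *v x) > 0)"

end

theory Submission imports Defs "HOL-Computational_Algebra.Polynomial" begin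

definition mm :: "real^'k \<Rightarrow> 'k \<Rightarrow> 'k \<Rightarrow> real" where
  "mm a i j = 1 / (1 - a$i * a$j)"

definition Qf :: "real^'k \<Rightarrow> real^'k \<Rightarrow> real" where
  "Qf a x = (\<Sum>i\<in>UNIV. \<Sum>j\<in>UNIV. x$i * x$j * mm a i j)"

lemma prod_lt1: assumes "\<And>i. \<bar>a$i\<bar> < (1::real)" shows "\<bar>a$i * a$j\<bar> < 1"
proof -
  have "\<bar>a$i * a$j\<bar> = \<bar>a$i\<bar> * \<bar>a$j\<bar>" by (simp add: abs_mult)
  also have "\<dots> < 1" using assms[of i] assms[of j]
    by (metis abs_ge_zero dual_order.strict_trans2 less_eq_real_def mult_left_le mult_less_cancel_left2)
  finally show ?thesis .
qed

lemma sq_sum: "(\<Sum>i\<in>UNIV. y$i)\<^sup>2 = (\<Sum>i\<in>UNIV. \<Sum>j\<in>UNIV. y$i * (y$j::real))"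
  by (simp add: power2_eq_square sum_product)

lemma Q_step:
  assumes "\<And>i. \<bar>a$i\<bar> < (1::real)"
  shows "Qf a y = (\<Sum>i\<in>UNIV. y$i)\<^sup>2 + Qf a (\<chi> i. a$i * y$i)"
proof -
  have "Qf a y - Qf a (\<chi> i. a$i * y$i) = (\<Sum>i\<in>UNIV. \<Sum>j\<in>UNIV. y$i * y$j)"
    unfolding Qf_def sum_subtractf[symmetric]
  proof (intro sum.cong refl)
    fix i j
    have "1 - a$i * a$j \<noteq> 0" using prod_lt1[OF assms, of i j] by auto
    then have m: "mm a i j * (1 - a$i * a$j) = 1" unfolding mm_def by simp
    have "y $ i * y $ j * mm a i j - (\<chi> i. a $ i * y $ i) $ i * (\<chi> i. a $ i * y $ i) $ j * mm a i j
       = y$i * y$j * (mm a i j * (1 - a$i * a$j))" by (simp add: algebra_simps)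
    then show "y $ i * y $ j * mm a i j - (\<chi> i. a $ i * y $ i) $ i * (\<chi> i. a $ i * y $ i) $ j * mm a i j = y$i * y$j"
      using m by simp
  qed
  then show ?thesis using sq_sum[of y] by simp
qed

lemma Q_iter:
  assumes "\<And>i. \<bar>a$i\<bar> < (1::real)"
  shows "Qf a x = (\<Sum>n<N. (\<Sum>i\<in>UNIV. x$i * a$i^n)\<^sup>2) + Qf a (\<chi> i. a$i^N * x$i)"
proof (induction N)
  case 0
  then show ?case by (simp add: vec_eq_iff)
next
  case (Suc N)
  have e: "(\<chi> i. a$i * (\<chi> i. a$i^N * x$i)$i) = (\<chi> i. a$i^Suc N * x$i)" by (simp add: vec_eq_iff)
  have "Qf a (\<chi> i. a$i^N * x$i) = (\<Sum>i\<in>UNIV. x$i * a$i^N)\<^sup>2 + Qf a (\<chi> i. a$i^Suc N * x$i)"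
    using Q_step[OF assms, of "\<chi> i. a$i^N * x$i"] e by (simp add: mult.commute)
  then show ?case using Suc by simp
qed

lemma Q_lim:
  assumes "\<And>i. \<bar>a$i\<bar> < (1::real)"
  shows "(\<lambda>N. Qf a (\<chi> i. a$i^N * x$i)) \<longlonglongrightarrow> 0"
proof -
  have e: "(\<lambda>N. Qf a (\<chi> i. a$i^N * x$i)) = (\<lambda>N. \<Sum>i\<in>UNIV. \<Sum>j\<in>UNIV. (x$i * x$j * mm a i j) * (a$i * a$j)^N)"
    unfolding Qf_def by (intro ext sum.cong refl) (simp add: power_mult_distrib)
  have "(\<lambda>N. \<Sum>i\<in>UNIV. \<Sum>j\<in>UNIV. (x$i * x$j * mm a i j) * (a$i * a$j)^N) \<longlonglongrightarrow> (\<Sum>i\<in>(UNIV::'a set). \<Sum>j\<in>(UNIV::'a set). 0)"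
  proof (intro tendsto_sum)
    fix i j
    have "(\<lambda>N. (a$i * a$j)^N) \<longlonglongrightarrow> 0"
      by (rule LIMSEQ_power_zero) (use prod_lt1[OF assms, of i j] in simp)
    then show "(\<lambda>N. (x$i * x$j * mm a i j) * (a$i * a$j)^N) \<longlonglongrightarrow> 0"
      using tendsto_mult_left[of _ 0 sequentially "x$i * x$j * mm a i j"] by simp
  qed
  then show ?thesis using e by simp
qed

lemma Q_nonneg:
  assumes "\<And>i. \<bar>a$i\<bar> < (1::real)"
  shows "Qf a x \<ge> 0"
proof -
  have "(\<lambda>N. Qf a x - Qf a (\<chi> i. a$i^N * x$i)) \<longlonglongrightarrow> Qf a x - 0"
    by (intro tendsto_diff tendsto_const Q_lim[OF assms])
  moreover have "\<forall>N. Qf a x - Qf a (\<chi> i. a$i^N * x$i) \<ge> 0"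
  proof
    fix N
    have "Qf a x - Qf a (\<chi> i. a$i^N * x$i) = (\<Sum>n<N. (\<Sum>i\<in>UNIV. x$i * a$i^n)\<^sup>2)"
      using Q_iter[OF assms, of x N] by simp
    also have "\<dots> \<ge> 0" by (rule sum_nonneg) simp
    finally show "Qf a x - Qf a (\<chi> i. a$i^N * x$i) \<ge> 0" .
  qed
  ultimately show ?thesis
    using LIMSEQ_le_const by fastforce
qed

lemma Q_zero:
  assumes "\<And>i. \<bar>a$i\<bar> < (1::real)" and "Qf a x = 0"
  shows "(\<Sum>i\<in>UNIV. x$i * a$i^n) = 0"
proof -
  have "(\<Sum>m<Suc n. (\<Sum>i\<in>UNIV. x$i * a$i^m)\<^sup>2) = - Qf a (\<chi> i. a$i^Suc n * x$i)"
    using Q_iter[OF assms(1), of x "Suc n"] assms(2) by simp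
  also have "\<dots> \<le> 0" using Q_nonneg[OF assms(1)] by simp
  finally have "(\<Sum>m<Suc n. (\<Sum>i\<in>UNIV. x$i * a$i^m)\<^sup>2) \<le> 0" .
  moreover have "(\<Sum>i\<in>UNIV. x$i * a$i^n)\<^sup>2 \<le> (\<Sum>m<Suc n. (\<Sum>i\<in>UNIV. x$i * a$i^m)\<^sup>2)"
    by (rule member_le_sum) auto
  ultimately have "(\<Sum>i\<in>UNIV. x$i * a$i^n)\<^sup>2 \<le> 0" by linarith
  then show ?thesis by simp
qed

lemma powsum_zero:
  assumes inj: "inj (($) (a::real^'k))" and z: "\<And>n. (\<Sum>i\<in>UNIV. x$i * a$i^n) = 0"
  shows "x = 0"
proof -
  have "x$j = 0" for j
  proof -
    define p where "p = (\<Prod>i\<in>UNIV-{j}. [:- a$i, 1:])"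
    have pv: "poly p z = (\<Prod>i\<in>UNIV-{j}. z - a$i)" for z
      unfolding p_def by (simp add: poly_prod)
    have "(\<Sum>i\<in>UNIV. x$i * poly p (a$i)) = (\<Sum>i\<in>UNIV. \<Sum>n\<le>degree p. coeff p n * (x$i * a$i^n))"
      by (simp add: poly_altdef sum_distrib_left mult_ac)
    also have "\<dots> = (\<Sum>n\<le>degree p. coeff p n * (\<Sum>i\<in>UNIV. x$i * a$i^n))"
      by (subst sum.swap) (simp add: sum_distrib_left)
    also have "\<dots> = 0" using z by simp
    finally have s0: "(\<Sum>i\<in>UNIV. x$i * poly p (a$i)) = 0" .
    have "(\<Sum>i\<in>UNIV. x$i * poly p (a$i)) = x$j * poly p (a$j) + (\<Sum>i\<in>UNIV-{j}. x$i * poly p (a$i))"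
      by (simp add: sum.remove)
    also have "(\<Sum>i\<in>UNIV-{j}. x$i * poly p (a$i)) = 0"
    proof (intro sum.neutral ballI)
      fix i assume "i \<in> UNIV - {j}"
      then have "poly p (a$i) = 0" unfolding pv by (intro prod_zero) auto
      then show "x$i * poly p (a$i) = 0" by simp
    qed
    finally have "x$j * poly p (a$j) = 0" using s0 by simp
    moreover have "poly p (a$j) \<noteq> 0" unfolding pv
      using inj by (auto simp: inj_eq)
    ultimately show ?thesis by simp
  qed
  then show ?thesis by (simp add: vec_eq_iff)
qed

lemma Q_pos:
  assumes "\<And>i. \<bar>a$i\<bar> < (1::real)" and "inj (($) a)" and "x \<noteq> 0"
  shows "Qf a x > 0"
  using Q_nonneg[OF assms(1), of x] Q_zero[OF assms(1)] powsum_zero[OF assms(2)] assms(3)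
  by force

lemma Qf_inner: "Qf a x = x \<bullet> ((\<chi> i j. mm a i j) *v x)"
  unfolding Qf_def inner_vec_def matrix_vector_mult_def
  by (simp add: sum_distrib_left mult_ac)

lemma exists_w0:
  fixes a :: "real^'k"
  assumes lt: "\<And>i. \<bar>a$i\<bar> < (1::real)" and inj: "inj (($) a)"
  obtains w where "\<And>j. (\<Sum>i\<in>UNIV. mm a j i * w$i) = 1"
proof -
  let ?M = "(\<chi> i j. mm a i j) :: real^'k^'k"
  have "inj ((*v) ?M)"
  proof (rule injI)
    fix x y assume "?M *v x = ?M *v y"
    then have "?M *v (x - y) = 0" by (simp add: matrix_vector_mult_diff_distrib)
    then have "Qf a (x - y) = 0" by (simp add: Qf_inner)
    then have "x - y = 0" using Q_pos[OF lt inj, of "x - y"] by fastforce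
    then show "x = y" by simp
  qed
  then have "surj ((*v) ?M)"
    by (intro linear_inj_imp_surj matrix_vector_mul_linear)
  then obtain w where "?M *v w = (\<chi> i. 1)" by (metis surjE)
  then have "(\<Sum>i\<in>UNIV. mm a j i * w$i) = 1" for j
    by (auto simp: vec_eq_iff matrix_vector_mult_def)
  then show ?thesis using that by blast
qed

lemma exists_w:
  fixes a :: "real^'k"
  assumes lt: "\<And>i. \<bar>a$i\<bar> < (1::real)" and inj: "inj (($) a)" and nz: "\<And>i. a$i \<noteq> 0"
  obtains w where "\<And>j. (\<Sum>i\<in>UNIV. mm a j i * w$i) = 1"
    and "(\<Sum>i\<in>UNIV. w$i) = 1 - (\<Prod>l\<in>UNIV. - a$l)\<^sup>2"
proof -
  obtain w where w: "\<And>j. (\<Sum>i\<in>UNIV. mm a j i * w$i) = 1" using exists_w0[OF lt inj] by blast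
  define k where "k = CARD('k)"
  define P1 where "P1 = (\<Prod>l\<in>UNIV. [:1, - a$l:])"
  define P2 where "P2 = (\<Prod>l\<in>UNIV. [:- a$l, 1:])"
  define \<beta> where "\<beta> = (\<Prod>l\<in>UNIV. - a$l)"
  define h1 where "h1 = (\<Sum>i\<in>UNIV. smult (w$i) (\<Prod>l\<in>UNIV-{i}. [:1, - a$l:]))"
  have degP1: "degree P1 = k" unfolding P1_def k_def
    using nz by (subst degree_prod_eq_sum_degree) auto
  have degP2: "degree P2 = k" unfolding P2_def k_def
    by (subst degree_prod_eq_sum_degree) auto
  have "coeff P1 k = lead_coeff P1" using degP1 by simp
  also have "\<dots> = \<beta>" unfolding P1_def lead_coeff_prod \<beta>_def using nz by simp
  finally have lcP1: "coeff P1 k = \<beta>" .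
  have "coeff P2 k = lead_coeff P2" using degP2 by simp
  also have "\<dots> = 1" unfolding P2_def lead_coeff_prod by simp
  finally have lcP2: "coeff P2 k = 1" .
  have kpos: "k > 0" unfolding k_def by simp
  have degh1: "degree h1 \<le> k - 1" unfolding h1_def
  proof (intro degree_sum_le)
    fix i
    have "degree (\<Prod>l\<in>UNIV-{i}. [:1, - a$l:]) \<le> (\<Sum>l\<in>UNIV-{i}. degree [:1, - a$l:])"
      by (rule degree_prod_sum_le[simplified comp_def]) simp
    also have "\<dots> \<le> (\<Sum>l\<in>UNIV-{i}. 1)" by (intro sum_mono) simp
    also have "\<dots> = k - 1" unfolding k_def by (simp add: card_Diff_singleton)
    finally show "degree (smult (w$i) (\<Prod>l\<in>UNIV-{i}. [:1, - a$l:])) \<le> k - 1"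
      using degree_smult_le order_trans by blast
  qed auto
  have ch1: "coeff h1 k = 0" using degh1 kpos by (intro coeff_eq_0) linarith
  have eq: "h1 + smult \<beta> P2 = P1"
  proof (rule poly_eqI_degree_lead_coeff[where n = k and A = "range (($) a)"])
    show "coeff (h1 + smult \<beta> P2) k = coeff P1 k" using ch1 lcP1 lcP2 by simp
    show "k \<le> card (range (($) a))" using inj unfolding k_def by (simp add: card_image)
    show "degree (h1 + smult \<beta> P2) \<le> k"
      using degh1 degP2 degree_add_le[of h1 k "smult \<beta> P2"] degree_smult_le[of \<beta> P2] by linarith
    show "degree P1 \<le> k" using degP1 by simp
  next
    fix z assume "z \<in> range (($) a)"
    then obtain j where z: "z = a$j" by auto
    have pP2: "poly P2 z = 0" unfolding P2_def z poly_prod by (intro prod_zero) (auto intro!: bexI[of _ j])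
    have "poly h1 z = (\<Sum>i\<in>UNIV. w$i * (\<Prod>l\<in>UNIV-{i}. 1 - a$l * z))"
      unfolding h1_def by (simp add: poly_sum poly_prod algebra_simps)
    also have "\<dots> = (\<Sum>i\<in>UNIV. (\<Prod>l\<in>UNIV. 1 - a$l * z) * (mm a j i * w$i))"
    proof (intro sum.cong refl)
      fix i
      have ne: "1 - a$i * a$j \<noteq> 0" using prod_lt1[OF lt, of i j] by auto
      have ne': "1 - a$j * a$i \<noteq> 0" using ne by (simp add: mult.commute)
      have P: "(\<Prod>l\<in>UNIV. 1 - a$l * z) = (1 - a$j * a$i) * (\<Prod>l\<in>UNIV-{i}. 1 - a$l * z)"
        unfolding z by (simp add: prod.remove[of UNIV i] mult.commute)
      show "w$i * (\<Prod>l\<in>UNIV-{i}. 1 - a$l * z) = (\<Prod>l\<in>UNIV. 1 - a$l * z) * (mm a j i * w$i)"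
        unfolding P mm_def using ne' by simp
    qed
    also have "\<dots> = (\<Prod>l\<in>UNIV. 1 - a$l * z)" using w[of j] by (simp add: sum_distrib_left[symmetric])
    finally show "poly (h1 + smult \<beta> P2) z = poly P1 z"
      using pP2 unfolding P1_def by (simp add: poly_prod algebra_simps)
  qed
  have "poly (h1 + smult \<beta> P2) 0 = poly P1 0" using eq by simp
  moreover have "poly h1 0 = (\<Sum>i\<in>UNIV. w$i)" unfolding h1_def by (simp add: poly_sum poly_prod)
  moreover have "poly P2 0 = \<beta>" unfolding P2_def \<beta>_def by (simp add: poly_prod)
  moreover have "poly P1 0 = 1" unfolding P1_def by (simp add: poly_prod)
  ultimately have "(\<Sum>i\<in>UNIV. w$i) = 1 - \<beta>\<^sup>2" by (simp add: power2_eq_square)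
  then show ?thesis using that w unfolding \<beta>_def by blast
qed

lemma mm_sym: "mm a i j = mm a j i"
  unfolding mm_def by (simp add: mult.commute)

lemma key:
  fixes a :: "real^'k"
  assumes lt: "\<And>i. \<bar>a$i\<bar> < (1::real)" and inj: "inj (($) a)" and nz: "\<And>i. a$i \<noteq> 0"
  shows "1 - (\<Prod>l\<in>UNIV. - a$l)\<^sup>2 > 0"
    and "\<And>x. (\<Sum>i\<in>UNIV. x$i)\<^sup>2 \<le> (1 - (\<Prod>l\<in>UNIV. - a$l)\<^sup>2) * Qf a x"
    and "\<exists>w. w \<noteq> 0 \<and> (\<Sum>i\<in>UNIV. w$i)\<^sup>2 = (1 - (\<Prod>l\<in>UNIV. - a$l)\<^sup>2) * Qf a w"
proof -
  obtain w where w: "\<And>j. (\<Sum>i\<in>UNIV. mm a j i * w$i) = 1"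
    and sw: "(\<Sum>i\<in>UNIV. w$i) = 1 - (\<Prod>l\<in>UNIV. - a$l)\<^sup>2"
    using exists_w[OF lt inj nz] by blast
  define s where "s = (\<Sum>i\<in>UNIV. w$i)"
  have lin1: "(\<Sum>i\<in>UNIV. \<Sum>j\<in>UNIV. x$i * w$j * mm a i j) = (\<Sum>i\<in>UNIV. x$i)" for x
  proof -
    have "(\<Sum>i\<in>UNIV. \<Sum>j\<in>UNIV. x$i * w$j * mm a i j) = (\<Sum>i\<in>UNIV. x$i * (\<Sum>j\<in>UNIV. mm a i j * w$j))"
      by (simp add: sum_distrib_left mult_ac)
    then show ?thesis using w by simp
  qed
  have lin2: "(\<Sum>i\<in>UNIV. \<Sum>j\<in>UNIV. w$i * x$j * mm a i j) = (\<Sum>i\<in>UNIV. x$i)" for x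
  proof -
    have "(\<Sum>i\<in>UNIV. \<Sum>j\<in>UNIV. w$i * x$j * mm a i j) = (\<Sum>j\<in>UNIV. \<Sum>i\<in>UNIV. x$j * w$i * mm a j i)"
      by (subst sum.swap) (simp add: mm_sym mult_ac)
    then show ?thesis using lin1 by simp
  qed
  have Qw: "Qf a w = s" unfolding Qf_def s_def using lin1[of w] by simp
  have "w \<noteq> 0" using w[of undefined] by auto
  then have spos: "s > 0" using Q_pos[OF lt inj] Qw by metis
  then show "1 - (\<Prod>l\<in>UNIV. - a$l)\<^sup>2 > 0" using sw s_def by simp
  have expand: "Qf a (x - t *\<^sub>R w) = Qf a x - 2 * t * (\<Sum>i\<in>UNIV. x$i) + t\<^sup>2 * s" for x t
  proof -
    have "Qf a (x - t *\<^sub>R w) = (\<Sum>i\<in>UNIV. \<Sum>j\<in>UNIV. x$i * x$j * mm a i j - t * (x$i * w$j * mm a i j)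
        - t * (w$i * x$j * mm a i j) + t\<^sup>2 * (w$i * w$j * mm a i j))"
      unfolding Qf_def by (intro sum.cong refl) (simp add: algebra_simps power2_eq_square)
    also have "\<dots> = Qf a x - t * (\<Sum>i\<in>UNIV. \<Sum>j\<in>UNIV. x$i * w$j * mm a i j)
        - t * (\<Sum>i\<in>UNIV. \<Sum>j\<in>UNIV. w$i * x$j * mm a i j) + t\<^sup>2 * Qf a w"
      unfolding Qf_def by (simp add: sum.distrib sum_subtractf sum_distrib_left)
    finally show ?thesis using lin1 lin2 Qw by simp
  qed
  show "(\<Sum>i\<in>UNIV. x$i)\<^sup>2 \<le> (1 - (\<Prod>l\<in>UNIV. - a$l)\<^sup>2) * Qf a x" for x
  proof -
    define t where "t = (\<Sum>i\<in>UNIV. x$i) / s"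
    have "0 \<le> Qf a (x - t *\<^sub>R w)" by (rule Q_nonneg[OF lt])
    also have "\<dots> = Qf a x - (\<Sum>i\<in>UNIV. x$i)\<^sup>2 / s"
      unfolding expand t_def using spos by (simp add: field_simps power2_eq_square)
    finally have "(\<Sum>i\<in>UNIV. x$i)\<^sup>2 / s \<le> Qf a x" by simp
    then have "(\<Sum>i\<in>UNIV. x$i)\<^sup>2 \<le> s * Qf a x" using spos by (simp add: field_simps)
    then show ?thesis using sw s_def by simp
  qed
  show "\<exists>w. w \<noteq> 0 \<and> (\<Sum>i\<in>UNIV. w$i)\<^sup>2 = (1 - (\<Prod>l\<in>UNIV. - a$l)\<^sup>2) * Qf a w"
    using \<open>w \<noteq> 0\<close> Qw sw s_def by (auto simp: power2_eq_square)
qed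

lemma diag_left: "(diag_mat u ** X) $ i $ j = u$i * X$i$j"
proof -
  have "(diag_mat u ** X) $ i $ j = (\<Sum>k\<in>UNIV. (if i = k then u $ i else 0) * X $ k $ j)"
    unfolding matrix_matrix_mult_def diag_mat_def by simp
  also have "\<dots> = (\<Sum>k\<in>UNIV. if i = k then u$i * X$k$j else 0)"
    by (rule sum.cong) auto
  finally show ?thesis by simp
qed

lemma diag_right: "(X ** diag_mat u) $ i $ j = X$i$j * u$j"
proof -
  have "(X ** diag_mat u) $ i $ j = (\<Sum>k\<in>UNIV. X $ i $ k * (if k = j then u $ k else 0))"
    unfolding matrix_matrix_mult_def diag_mat_def by simp
  also have "\<dots> = (\<Sum>k\<in>UNIV. if k = j then X$i$k * u$j else 0)"
    by (rule sum.cong) auto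
  finally show ?thesis by simp
qed

lemma transpose_diag: "transpose (diag_mat u) = diag_mat u"
  unfolding transpose_def diag_mat_def by (simp add: vec_eq_iff)

lemma inv_diag:
  fixes u :: "real^'k"
  assumes "\<And>i. u$i \<noteq> 0"
  shows "matrix_inv (diag_mat u) = diag_mat (\<chi> i. 1 / u$i)"
proof -
  let ?A = "diag_mat u" and ?B = "diag_mat (\<chi> i. 1 / u$i)"
  have AB: "?A ** ?B = mat 1" using assms
    by (simp add: vec_eq_iff diag_left mat_def) (simp add: diag_mat_def)
  have BA: "?B ** ?A = mat 1" using assms
    by (simp add: vec_eq_iff diag_left mat_def) (simp add: diag_mat_def)
  show ?thesis unfolding matrix_inv_def
  proof (rule someI2[of _ ?B])
    show "?A ** ?B = mat 1 \<and> ?B ** ?A = mat 1" using AB BA by simp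
  next
    fix A' assume "?A ** A' = mat 1 \<and> A' ** ?A = mat 1"
    then have "A' = A' ** (?A ** ?B)" "A' ** ?A = mat 1" using AB by (auto simp: matrix_mul_rid)
    then show "A' = ?B" by (simp add: matrix_mul_assoc matrix_mul_lid)
  qed
qed

theorem mainTheorem6:
  fixes lam :: "real^'k" and g :: "real^'k" and h p :: real
    and J M :: "real^'k^'k"
  assumes distinct: "inj (\<lambda>i. lam $ i)"
    and big: "\<And>i. \<bar>lam $ i\<bar> > 1"
    and h: "h \<noteq> 0" and p: "p \<ge> 0"
    and g: "\<And>i. g $ i \<noteq> 0"
    and J: "J = matrix_inv (diag_mat lam) ** J ** transpose (matrix_inv (diag_mat lam))
              - (1 / (1 + h\<^sup>2 * p)) *\<^sub>R outer g g
              + matrix_inv (diag_mat lam) ** outer g g ** transpose (matrix_inv (diag_mat lam))"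
    and J_unique: "\<And>X. X = matrix_inv (diag_mat lam) ** X ** transpose (matrix_inv (diag_mat lam))
              - (1 / (1 + h\<^sup>2 * p)) *\<^sub>R outer g g
              + matrix_inv (diag_mat lam) ** outer g g ** transpose (matrix_inv (diag_mat lam))
              \<Longrightarrow> X = J"
    and M: "M = matrix_inv (diag_mat lam) ** M ** transpose (matrix_inv (diag_mat lam)) + ones_mat"
  shows "J = diag_mat g ** ((h\<^sup>2 * p / (1 + h\<^sup>2 * p)) *\<^sub>R M - ones_mat) ** diag_mat g
         \<and> (pos_def J \<longleftrightarrow> 1 + h\<^sup>2 * p > \<bar>det (diag_mat lam)\<bar>\<^sup>2)
         \<and> (1 + h\<^sup>2 * p > \<bar>det (diag_mat lam)\<bar>\<^sup>2 \<longleftrightarrow>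
              (\<Sum>j\<in>UNIV. ln \<bar>lam $ j\<bar>) < ln (1 + h\<^sup>2 * p) / 2)"
proof -
  define a :: "real^'k" where "a = (\<chi> i. 1 / lam$i)"
  define d where "d = 1 + h\<^sup>2 * p"
  define c where "c = 1 / d"
  define e where "e = h\<^sup>2 * p / d"
  have dpos: "d \<ge> 1" unfolding d_def using p by simp
  have ec: "e = 1 - c" unfolding e_def c_def d_def using dpos d_def by (simp add: field_simps)
  have lamnz: "\<And>i. lam$i \<noteq> 0" using big by (metis abs_zero not_one_less_zero)
  have alt: "\<And>i. \<bar>a$i\<bar> < 1" unfolding a_def using big
    by (simp add: abs_div) (metis abs_ge_zero divide_less_eq_1_pos less_trans zero_less_one)
  have anz: "\<And>i. a$i \<noteq> 0" unfolding a_def using lamnz by simp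
  have ainj: "inj (($) a)" unfolding a_def using distinct by (auto simp: inj_def)
  have inv: "matrix_inv (diag_mat lam) = diag_mat a" unfolding a_def by (rule inv_diag[OF lamnz])
  have sandw: "(diag_mat u ** X ** transpose (diag_mat u)) $ i $ j = u$i * X$i$j * u$j" for u X i j
    by (simp add: transpose_diag diag_right diag_left)
  have Mij: "M$i$j = mm a i j" for i j
  proof -
    have M': "M = diag_mat a ** M ** transpose (diag_mat a) + ones_mat" using M unfolding inv .
    have "M$i$j = (diag_mat a ** M ** transpose (diag_mat a) + ones_mat)$i$j"
      by (metis M')
    also have "\<dots> = a$i * M$i$j * a$j + 1" by (simp add: sandw ones_mat_def)
    finally have "M$i$j = a$i * M$i$j * a$j + 1" .
    moreover have "1 - a$i * a$j \<noteq> 0" using prod_lt1[OF alt, of i j] by auto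
    ultimately show ?thesis unfolding mm_def by (simp add: field_simps)
  qed
  have Jij: "J$i$j = g$i * g$j * (e * mm a i j - 1)" for i j
  proof -
    have J': "J = diag_mat a ** J ** transpose (diag_mat a) - c *\<^sub>R outer g g
        + diag_mat a ** outer g g ** transpose (diag_mat a)" using J unfolding inv c_def d_def .
    have "J$i$j = (diag_mat a ** J ** transpose (diag_mat a) - c *\<^sub>R outer g g
        + diag_mat a ** outer g g ** transpose (diag_mat a))$i$j"
      by (metis J')
    also have "\<dots> = a$i * J$i$j * a$j - c * (g$i * g$j) + a$i * (g$i * g$j) * a$j"
      by (simp add: sandw outer_def)
    finally have "J$i$j = a$i * J$i$j * a$j - c * (g$i * g$j) + a$i * (g$i * g$j) * a$j" .
    moreover have ne: "1 - a$i * a$j \<noteq> 0" using prod_lt1[OF alt, of i j] by auto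
    ultimately have "J$i$j * (1 - a$i * a$j) = g$i * g$j * (a$i * a$j - c)"
      by (simp add: algebra_simps)
    then have "J$i$j = g$i * g$j * (a$i * a$j - c) / (1 - a$i * a$j)" using ne by (simp add: field_simps)
    also have "\<dots> = g$i * g$j * (e * mm a i j - 1)"
      unfolding ec mm_def using ne by (simp add: field_simps)
    finally show ?thesis .
  qed
  have part1: "J = diag_mat g ** ((h\<^sup>2 * p / (1 + h\<^sup>2 * p)) *\<^sub>R M - ones_mat) ** diag_mat g"
    by (simp add: vec_eq_iff diag_left diag_right Jij Mij ones_mat_def e_def d_def mult_ac)
  have qf: "x \<bullet> (J *v x) = e * Qf a (\<chi> i. g$i * x$i) - (\<Sum>i\<in>UNIV. g$i * x$i)\<^sup>2" for x
  proof -
    have "x \<bullet> (J *v x) = (\<Sum>i\<in>UNIV. \<Sum>j\<in>UNIV. e * ((g$i * x$i) * (g$j * x$j) * mm a i j) - (g$i * x$i) * (g$j * x$j))"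
      unfolding inner_vec_def matrix_vector_mult_def
      by (simp add: sum_distrib_left Jij algebra_simps)
    also have "\<dots> = e * Qf a (\<chi> i. g$i * x$i) - (\<Sum>i\<in>UNIV. \<Sum>j\<in>UNIV. (g$i * x$i) * (g$j * x$j))"
      unfolding Qf_def by (simp add: sum_subtractf sum_distrib_left)
    finally show ?thesis using sq_sum[of "\<chi> i. g$i * x$i"] by simp
  qed
  have symJ: "transpose J = J"
    by (simp add: vec_eq_iff transpose_def Jij mm_sym mult_ac)
  define s where "s = 1 - (\<Prod>l\<in>UNIV. - a$l)\<^sup>2"
  have detsq: "\<bar>det (diag_mat lam)\<bar>\<^sup>2 = (\<Prod>l\<in>UNIV. lam$l)\<^sup>2"
    by (subst det_diagonal) (auto simp: diag_mat_def)
  have Lpos: "(\<Prod>l\<in>UNIV. lam$l)\<^sup>2 > 0" using lamnz by (simp add: prod_zero_iff)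
  have beta: "(\<Prod>l\<in>UNIV. - a$l)\<^sup>2 = 1 / (\<Prod>l\<in>UNIV. lam$l)\<^sup>2"
  proof -
    have "(\<Prod>l\<in>UNIV. - a$l)\<^sup>2 = (\<Prod>l\<in>UNIV. (a$l)\<^sup>2)"
      by (simp only: prod_power_distrib power2_minus)
    also have "\<dots> = (\<Prod>l\<in>UNIV. 1 / (lam$l)\<^sup>2)" unfolding a_def by (simp add: power_divide)
    also have "\<dots> = 1 / (\<Prod>l\<in>UNIV. lam$l)\<^sup>2" by (simp add: prod_dividef power_divide prod_power_distrib)
    finally show ?thesis .
  qed
  have cond: "d > \<bar>det (diag_mat lam)\<bar>\<^sup>2 \<longleftrightarrow> e > s"
  proof -
    have "e > s \<longleftrightarrow> c < 1 / (\<Prod>l\<in>UNIV. lam$l)\<^sup>2" unfolding ec s_def beta by linarith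
    also have "\<dots> \<longleftrightarrow> (\<Prod>l\<in>UNIV. lam$l)\<^sup>2 < d" unfolding c_def using Lpos dpos
      by (simp add: frac_less_eq divide_less_eq)
    finally show ?thesis unfolding detsq by simp
  qed
  have part2: "pos_def J \<longleftrightarrow> d > \<bar>det (diag_mat lam)\<bar>\<^sup>2"
  proof
    assume pd: "pos_def J"
    obtain w where w0: "w \<noteq> 0" and weq: "(\<Sum>i\<in>UNIV. w$i)\<^sup>2 = s * Qf a w"
      using key(3)[OF alt ainj anz] unfolding s_def by blast
    define x where "x = (\<chi> i. w$i / g$i)"
    have xw: "(\<chi> i. g$i * x$i) = w" unfolding x_def using g by (simp add: vec_eq_iff)
    have "x \<noteq> 0" using w0 xw by (auto simp: vec_eq_iff) (metis mult_zero_right)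
    then have "x \<bullet> (J *v x) > 0" using pd unfolding pos_def_def by blast
    moreover have sxw: "(\<Sum>i\<in>UNIV. g$i * x$i) = (\<Sum>i\<in>UNIV. w$i)" unfolding x_def using g by simp
    ultimately have "e * Qf a w - s * Qf a w > 0" unfolding qf xw sxw weq by simp
    moreover have "Qf a w > 0" using Q_pos[OF alt ainj w0] .
    ultimately have "e > s" by (simp add: left_diff_distrib[symmetric] zero_less_mult_iff)
    then show "d > \<bar>det (diag_mat lam)\<bar>\<^sup>2" using cond by simp
  next
    assume "d > \<bar>det (diag_mat lam)\<bar>\<^sup>2"
    then have es: "e > s" using cond by simp
    have "x \<bullet> (J *v x) > 0" if "x \<noteq> 0" for x
    proof -
      define y where "y = (\<chi> i. g$i * x$i)"
      have "y \<noteq> 0" using that g unfolding y_def by (auto simp: vec_eq_iff)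
      then have Qy: "Qf a y > 0" using Q_pos[OF alt ainj] by blast
      have "(\<Sum>i\<in>UNIV. y$i)\<^sup>2 \<le> s * Qf a y" using key(2)[OF alt ainj anz] unfolding s_def by blast
      moreover have "s * Qf a y < e * Qf a y" using es Qy by simp
      ultimately show ?thesis unfolding qf y_def[symmetric] by (simp add: y_def)
    qed
    then show "pos_def J" unfolding pos_def_def using symJ by blast
  qed
  have part3: "d > \<bar>det (diag_mat lam)\<bar>\<^sup>2 \<longleftrightarrow> (\<Sum>j\<in>UNIV. ln \<bar>lam $ j\<bar>) < ln d / 2"
  proof -
    have "ln ((\<Prod>l\<in>UNIV. lam$l)\<^sup>2) = (\<Sum>j\<in>UNIV. 2 * ln \<bar>lam $ j\<bar>)"
    proof -
      have "(\<Prod>l\<in>UNIV. lam$l)\<^sup>2 = (\<Prod>l\<in>UNIV. \<bar>lam$l\<bar>\<^sup>2)" by (simp add: prod_power_distrib)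
      then have "ln ((\<Prod>l\<in>UNIV. lam$l)\<^sup>2) = (\<Sum>l\<in>UNIV. ln (\<bar>lam$l\<bar>\<^sup>2))"
        using lamnz by (simp add: ln_prod)
      also have "\<dots> = (\<Sum>j\<in>UNIV. 2 * ln \<bar>lam $ j\<bar>)"
      proof (intro sum.cong refl)
        fix l
        have "ln (\<bar>lam$l\<bar>^2) = real 2 * ln \<bar>lam$l\<bar>" by (metis ln_realpow zero_less_abs_iff lamnz)
        then show "ln (\<bar>lam$l\<bar>\<^sup>2) = 2 * ln \<bar>lam $ l\<bar>" by simp
      qed
      finally show ?thesis .
    qed
    moreover have "d > (\<Prod>l\<in>UNIV. lam$l)\<^sup>2 \<longleftrightarrow> ln d > ln ((\<Prod>l\<in>UNIV. lam$l)\<^sup>2)"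
      using Lpos dpos by simp
    ultimately show ?thesis unfolding detsq by (simp add: sum_distrib_left[symmetric] mult.commute)
  qed
  show ?thesis using part1 part2 part3 unfolding d_def by blast
qed

end
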